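(* Let $n>1$, $a\in\mathcal{T}_n$, and consider the semigroup $(\mathcal{T}_n,*_a)$. Let $x\in\mathcal{T}_n$. If $\operatorname{rank}(a)>1$, $\operatorname{rank}(x)\le\operatorname{rank}(a)$, and every block $B$ of $\rho_x$ satisfies $B\cap\operatorname{ran}(a)\ne\varnothing$, then $$L_x=\{y\in\mathcal{T}_n : \operatorname{ran}(y)=\operatorname{ran}(x) \text{ and } B\cap\operatorname{ran}(a)\neq\varnothing \text{ for every block } B \text{ of } \rho_y\}.$$ Otherwise $L_x=\{x\}$. In particular, if $\operatorname{rank}(a)=1$ then all $\mathcal{L}$-classes of $(\mathcal{T}_n,*_a)$ consist of one element.
   Context: $\mathcal{T}_n$ is the set of all maps $N\to N$, $N=\{1,\dots,n\}$. Maps are composed from left to right: $(xy)(i)=y(x(i))$. For fixed $a\in\mathcal{T}_n$, $x*_a y:=xay$; $(\mathcal{T}_n,*_a)$ is a semigroup. $\operatorname{ran}(x)$ is the image of $x$, $\operatorname{rank}(x)=|\operatorname{ran}(x)|$, and $\rho_x$ is the partition of $N$ into the nonempty fibres of $x$ ($i,j$ in the same block iff $x(i)=x(j)$). Green's relations in a semigroup $S$: with $S^1$ the semigroup $S$ with an identity adjoined, $x\mathcal{L}y$ iff $S^1x=S^1y$, $x\mathcal{R}y$ iff $xS^1=yS^1$, $\mathcal{H}=\mathcal{L}\cap\mathcal{R}$, $\mathcal{D}=\mathcal{L}\circ\mathcal{R}$ (which equals $\mathcal{R}\circ\mathcal{L}$); $L_x,R_x,H_x,D_x$ denote the classes of $x$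 in $(\mathcal{T}_n,*_a)$. *)

theory Defs
  imports Main "HOL-Library.Cardinality"
begin

(* T_n is modelled as the maps 'n => 'n for a finite type 'n with CARD('n) = n.
   Maps compose left to right: (x y)(i) = y (x i), so the sandwich product
   x *_a y = x a y is the HOL function  y o a o x. *)
definition sandwich :: "('n \<Rightarrow> 'n) \<Rightarrow> ('n \<Rightarrow> 'n) \<Rightarrow> ('n \<Rightarrow> 'n) \<Rightarrow> ('n \<Rightarrow> 'n)" where
  "sandwich a x y = y \<circ> a \<circ> x"

(* S^1 x in (T_n, *_a): the principal left ideal with identity adjoined *)
definition left_ideal1 :: "('n \<Rightarrow> 'n) \<Rightarrow> ('n \<Rightarrow> 'n) \<Rightarrow> ('n \<Rightarrow> 'n) set" where
  "left_ideal1 a x = insert x {sandwich a s x | s. True}"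

definition L_rel :: "('n \<Rightarrow> 'n) \<Rightarrow> ('n \<Rightarrow> 'n) \<Rightarrow> ('n \<Rightarrow> 'n) \<Rightarrow> bool" where
  "L_rel a x y \<longleftrightarrow> left_ideal1 a x = left_ideal1 a y"

definition L_class :: "('n \<Rightarrow> 'n) \<Rightarrow> ('n \<Rightarrow> 'n) \<Rightarrow> ('n \<Rightarrow> 'n) set" where
  "L_class a x = {y. L_rel a x y}"

definition rank :: "('n \<Rightarrow> 'n) \<Rightarrow> nat" where
  "rank x = card (range x)"

definition kernel_blocks :: "('n \<Rightarrow> 'n) \<Rightarrow> 'n set set" where
  "kernel_blocks x = {x -` {v} | v. v \<in> range x}"

end

theory Submission
  imports Defs
begin

lemma blocks_iff: "(\<forall>B\<in>kernel_blocks x. B \<inter> range a \<noteq> {}) \<longleftrightarrow> x ` range a = range x"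
proof
  assume h: "\<forall>B\<in>kernel_blocks x. B \<inter> range a \<noteq> {}"
  show "x ` range a = range x"
  proof (rule subset_antisym)
    show "x ` range a \<subseteq> range x" by (rule image_subsetI) (rule rangeI)
    show "range x \<subseteq> x ` range a"
    proof
      fix v assume v: "v \<in> range x"
      then have "x -` {v} \<in> kernel_blocks x" unfolding kernel_blocks_def by blast
      with h have "x -` {v} \<inter> range a \<noteq> {}" by (rule bspec)
      then have "\<exists>w. w \<in> x -` {v} \<inter> range a" unfolding ex_in_conv .
      then obtain w where "w \<in> x -` {v} \<inter> range a" by (elim exE)
      then have "x w = v" "w \<in> range a" by simp_all
      then show "v \<in> x ` range a" by (intro image_eqI[of v x w]) simp_all
    qed
  qed
next
  assume h: "x ` range a = range x"
  show "\<forall>B\<in>kernel_blocks x. B \<inter> range a \<noteq> {}"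
  proof
    fix B assume "B \<in> kernel_blocks x"
    then obtain v where B: "B = x -` {v}" and v: "v \<in> range x" unfolding kernel_blocks_def by blast
    from v h have "v \<in> x ` range a" by simp
    then obtain w where w: "v = x w" "w \<in> range a" by (erule imageE)
    then have "w \<in> B \<inter> range a" using B by simp
    then show "B \<inter> range a \<noteq> {}" by (intro notI) simp
  qed
qed

lemma mem_li: "z \<in> left_ideal1 a y \<longleftrightarrow> z = y \<or> (\<exists>u. z = y \<circ> a \<circ> u)"
  unfolding left_ideal1_def sandwich_def by simp
lemma L_char: "y \<in> L_class a x \<longleftrightarrow> y = x \<or> (\<exists>s t. y = x \<circ> a \<circ> s \<and> x = y \<circ> a \<circ> t)"
proof
  assume "y \<in> L_class a x"
  then have e: "left_ideal1 a x = left_ideal1 a y" by (simp add: L_class_def L_rel_def)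
  have "y \<in> left_ideal1 a x" unfolding e by (simp add: mem_li)
  then have A: "y = x \<or> (\<exists>s. y = x \<circ> a \<circ> s)" by (simp only: mem_li)
  have "x \<in> left_ideal1 a y" unfolding e[symmetric] by (simp add: mem_li)
  then have B: "x = y \<or> (\<exists>s. x = y \<circ> a \<circ> s)" by (simp only: mem_li)
  show "y = x \<or> (\<exists>s t. y = x \<circ> a \<circ> s \<and> x = y \<circ> a \<circ> t)"
  proof (cases "y = x")
    case False
    with A obtain s where s: "y = x \<circ> a \<circ> s" by blast
    from False B obtain t where t: "x = y \<circ> a \<circ> t" by metis
    from s t show ?thesis by (intro disjI2 exI conjI)
  qed (rule disjI1)
next
  assume h: "y = x \<or> (\<exists>s t. y = x \<circ> a \<circ> s \<and> x = y \<circ> a \<circ> t)"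
  show "y \<in> L_class a x"
  proof (cases "y = x")
    case True then show ?thesis by (simp add: L_class_def L_rel_def)
  next
    case False
    with h obtain s t where st: "y = x \<circ> a \<circ> s" "x = y \<circ> a \<circ> t" by metis
    have 1: "left_ideal1 a y \<subseteq> left_ideal1 a x"
    proof
      fix z assume "z \<in> left_ideal1 a y"
      then have "z = y \<or> (\<exists>u. z = y \<circ> a \<circ> u)" by (simp only: mem_li)
      then show "z \<in> left_ideal1 a x"
      proof
        assume "z = y" then have "z = x \<circ> a \<circ> s" using st(1) by simp
        then show ?thesis unfolding mem_li by (intro disjI2 exI)
      next
        assume "\<exists>u. z = y \<circ> a \<circ> u"
        then obtain u where "z = y \<circ> a \<circ> u" by (elim exE)
        then have "z = x \<circ> a \<circ> (s \<circ> a \<circ> u)" using st(1) by (simp add: comp_assoc)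
        then show ?thesis unfolding mem_li by (intro disjI2 exI)
      qed
    qed
    have 2: "left_ideal1 a x \<subseteq> left_ideal1 a y"
    proof
      fix z assume "z \<in> left_ideal1 a x"
      then have "z = x \<or> (\<exists>u. z = x \<circ> a \<circ> u)" by (simp only: mem_li)
      then show "z \<in> left_ideal1 a y"
      proof
        assume "z = x" then have "z = y \<circ> a \<circ> t" using st(2) by simp
        then show ?thesis unfolding mem_li by (intro disjI2 exI)
      next
        assume "\<exists>u. z = x \<circ> a \<circ> u"
        then obtain u where "z = x \<circ> a \<circ> u" by (elim exE)
        then have "z = y \<circ> a \<circ> (t \<circ> a \<circ> u)" using st(2) by (simp add: comp_assoc)
        then show ?thesis unfolding mem_li by (intro disjI2 exI)
      qed
    qed
    have "left_ideal1 a x = left_ideal1 a y" using 2 1 by (rule subset_antisym)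
    then show ?thesis by (simp add: L_class_def L_rel_def)
  qed
qed
lemma cyc4: "(A::'a set) \<subseteq> B \<Longrightarrow> B \<subseteq> C \<Longrightarrow> C \<subseteq> D \<Longrightarrow> D \<subseteq> A \<Longrightarrow> A = C \<and> B = C \<and> D = A"
  by blast

lemma exists_fac:
  assumes "range y \<subseteq> x ` range a"
  shows "\<exists>s. y = x \<circ> a \<circ> s"
proof -
  have "\<forall>i. \<exists>j. y i = x (a j)"
  proof
    fix i
    have "y i \<in> x ` range a" using assms by (rule subsetD) simp
    then show "\<exists>j. y i = x (a j)" by (auto simp: image_iff)
  qed
  then have "\<exists>s. \<forall>i. y i = x (a (s i))" by (rule choice)
  then obtain s where "\<forall>i. y i = x (a (s i))" by (elim exE)
  then have "y = x \<circ> a \<circ> s" by (intro ext) simp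
  then show ?thesis by blast
qed

lemma L_set: "L_class a x = (if x ` range a = range x
   then {y. range y = range x \<and> y ` range a = range y} else {x})"
proof (cases "x ` range a = range x")
  case True
  have "y \<in> L_class a x \<longleftrightarrow> range y = range x \<and> y ` range a = range y" for y
  proof
    assume "y \<in> L_class a x"
    then have "y = x \<or> (\<exists>s t. y = x \<circ> a \<circ> s \<and> x = y \<circ> a \<circ> t)" by (simp add: L_char)
    then show "range y = range x \<and> y ` range a = range y"
    proof
      assume "y = x" then show ?thesis using True by simp
    next
      assume "\<exists>s t. y = x \<circ> a \<circ> s \<and> x = y \<circ> a \<circ> t"
      then obtain s t where st: "y = x \<circ> a \<circ> s" "x = y \<circ> a \<circ> t" by (elim exE conjE)
      have "range y \<subseteq> x ` range a" using st(1) by auto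
      moreover have "x ` range a \<subseteq> range x" by auto
      moreover have "range x \<subseteq> y ` range a" using st(2) by auto
      moreover have "y ` range a \<subseteq> range y" by auto
      ultimately have "range y = range x \<and> x ` range a = range x \<and> y ` range a = range y" by (rule cyc4)
      then show ?thesis by (elim conjE) (intro conjI)
    qed
  next
    assume h: "range y = range x \<and> y ` range a = range y"
    have r1: "range y \<subseteq> x ` range a" using h True by simp
    have r2: "range x \<subseteq> y ` range a" using h True by simp
    obtain s where s: "y = x \<circ> a \<circ> s" using exists_fac[OF r1] by (elim exE)
    obtain t where t: "x = y \<circ> a \<circ> t" using exists_fac[OF r2] by (elim exE)
    have "\<exists>s t. y = x \<circ> a \<circ> s \<and> x = y \<circ> a \<circ> t" using s t by (intro exI conjI)
    then show "y \<in> L_class a x" unfolding L_char by (rule disjI2)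
  qed
  then have "L_class a x = {y. range y = range x \<and> y ` range a = range y}" by (intro set_eqI) simp
  then show ?thesis using True by simp
next
  case False
  have "y \<in> L_class a x \<longleftrightarrow> y = x" for y
  proof
    assume "y \<in> L_class a x"
    then have "y = x \<or> (\<exists>s t. y = x \<circ> a \<circ> s \<and> x = y \<circ> a \<circ> t)" by (simp add: L_char)
    then show "y = x"
    proof
      assume "\<exists>s t. y = x \<circ> a \<circ> s \<and> x = y \<circ> a \<circ> t"
      then obtain s t where st: "y = x \<circ> a \<circ> s" "x = y \<circ> a \<circ> t" by (elim exE conjE)
      have "range y \<subseteq> x ` range a" using st(1) by auto
      moreover have "x ` range a \<subseteq> range x" by auto
      moreover have "range x \<subseteq> y ` range a" using st(2) by auto
      moreover have "y ` range a \<subseteq> range y" by auto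
      ultimately have "range y = range x \<and> x ` range a = range x \<and> y ` range a = range y" by (rule cyc4)
      then have "x ` range a = range x" by (elim conjE)
      then show "y = x" using False by blast
    qed
  qed (simp add: L_char)
  then show ?thesis using False by auto
qed

lemma rank1_single:
  fixes a z :: "'n::finite \<Rightarrow> 'n"
  assumes "rank a = 1"
  shows "L_class a z = {z}"
proof (cases "z ` range a = range z")
  case True
  obtain c where c: "range a = {c}" using assms unfolding rank_def by (metis card_1_singletonE)
  have "y = z" if "range y = range z" for y
  proof
    fix i
    have "y i \<in> {z c}" "z i \<in> {z c}" using that True c by auto
    then show "y i = z i" by simp
  qed
  then show ?thesis unfolding L_set using True by auto
next
  case False then show ?thesis unfolding L_set by simp
qed

theorem theorem6:
  fixes a x :: "'n::finite \<Rightarrow> 'n"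
  assumes "CARD('n) > 1"
  shows "(rank a > 1 \<and> rank x \<le> rank a \<and> (\<forall>B\<in>kernel_blocks x. B \<inter> range a \<noteq> {})
            \<longrightarrow> L_class a x = {y. range y = range x \<and> (\<forall>B\<in>kernel_blocks y. B \<inter> range a \<noteq> {})})
       \<and> (\<not> (rank a > 1 \<and> rank x \<le> rank a \<and> (\<forall>B\<in>kernel_blocks x. B \<inter> range a \<noteq> {}))
            \<longrightarrow> L_class a x = {x})
       \<and> (rank a = 1 \<longrightarrow> (\<forall>z :: 'n \<Rightarrow> 'n. L_class a z = {z}))"
proof (intro conjI impI allI)
  assume "rank a > 1 \<and> rank x \<le> rank a \<and> (\<forall>B\<in>kernel_blocks x. B \<inter> range a \<noteq> {})"
  then have "x ` range a = range x" by (simp add: blocks_iff)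
  then show "L_class a x = {y. range y = range x \<and> (\<forall>B\<in>kernel_blocks y. B \<inter> range a \<noteq> {})}"
    unfolding L_set blocks_iff by simp
next
  assume h: "\<not> (rank a > 1 \<and> rank x \<le> rank a \<and> (\<forall>B\<in>kernel_blocks x. B \<inter> range a \<noteq> {}))"
  show "L_class a x = {x}"
  proof (cases "x ` range a = range x")
    case False then show ?thesis unfolding L_set by simp
  next
    case True
    have "rank x \<le> rank a" unfolding rank_def using True card_image_le[of "range a" x] by simp
    moreover have "rank a \<noteq> 0" unfolding rank_def by simp
    ultimately have "rank a = 1" using h True by (auto simp: blocks_iff)
    then show ?thesis by (rule rank1_single)
  qed
next
  fix z :: "'n \<Rightarrow> 'n"
  assume "rank a = 1"
  then show "L_class a z = {z}" by (rule rank1_single)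
qed

end
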